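(* For the single-choice constraint $\mathcal{F}=\{S\subseteq E:|S|\le1\}$ and every product distribution $D$ of the element weights, $$\lim_{M\to\infty}\textsf{EoR}(\mathcal{F},M^D)=\textsf{PbM}(\mathcal{F},D).$$
   Context: Setting: $E$ is a finite ground set; each $e\in E$ has a nonnegative weight $w_e\sim D_e$, independently, the $D_e$ having no point masses, $D=\times_e D_e$. Elements arrive one by one in a fixed order with their realized weights; an online algorithm (knowing the distribution, possibly randomized) decides immediately and irrevocably upon each arrival whether to accept, keeping the accepted set in $\mathcal{F}$. $f(\boldsymbol{w})=\max_{e}w_e$; $\boldsymbol{w}(\textsf{ALG}(\boldsymbol{w}))$ is the weight of the set selected by $\textsf{ALG}$. For a product distribution $P$, $\textsf{EoR}(\mathcal{F},P)=\sup_{\textsf{ALG}}\mathbf{E}_{\boldsymbol{w}\sim P}[\boldsymbol{w}(\textsf{ALG}(\boldsymbol{w}))/f(\boldsymbol{w})]$ and $\textsf{PbM}(\mathcal{F},P)=\sup_{\textsf{ALG}}\Pr_{\boldsymbol{w}\sim P}[\boldsymbol{w}(\textsf{ALG}(\boldsymbol{w}))=f(\boldsymbol{w})]$. For $M>0$, $M^D$ is the product distribution of $(M^{w_1},\dots,M^{w_{|E|}})$ where $\boldsymbol{w}\sim D$. *)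

theory Defs
  imports "HOL-Probability.Probability"
begin

text \<open>Ground set E = {..<n}; elements arrive in the order 0, 1, ..., n-1.
  Weight vectors are functions nat => real (only the values on {..<n} matter).\<close>

definition single_choice :: "nat \<Rightarrow> nat set set" where
  "single_choice n = {S. S \<subseteq> {..<n} \<and> card S \<le> 1}"

text \<open>A (randomized) online algorithm for the single-choice constraint, in behavioral
  form: p i w is the probability of accepting element i, given that nothing has been
  accepted yet; it may depend only on the weights revealed so far (w 0, ..., w i),
  and is measurable.  After one acceptance the algorithm must reject everything
  (otherwise the accepted set would leave F).\<close>
definition online_alg :: "nat \<Rightarrow> (nat \<Rightarrow> (nat \<Rightarrow> real) \<Rightarrow> real) \<Rightarrow> bool" where
  "online_alg n p \<longleftrightarrow>
     (\<forall>i<n. (\<forall>w. 0 \<le> p i w \<and> p i w \<le> 1)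
          \<and> (\<forall>w w'. (\<forall>j\<le>i. w j = w' j) \<longrightarrow> p i w = p i w')
          \<and> p i \<in> borel_measurable (PiM {..<n} (\<lambda>_. borel)))"

definition accept_prob :: "(nat \<Rightarrow> (nat \<Rightarrow> real) \<Rightarrow> real) \<Rightarrow> (nat \<Rightarrow> real) \<Rightarrow> nat \<Rightarrow> real" where
  "accept_prob p w i = p i w * (\<Prod>j<i. (1 - p j w))"

definition fmax :: "nat \<Rightarrow> (nat \<Rightarrow> real) \<Rightarrow> real" where
  "fmax n w = Max (w ` {..<n})"

definition alg_ratio :: "nat \<Rightarrow> (nat \<Rightarrow> (nat \<Rightarrow> real) \<Rightarrow> real) \<Rightarrow> (nat \<Rightarrow> real) \<Rightarrow> real" where
  "alg_ratio n p w = (\<Sum>i<n. accept_prob p w i * w i) / fmax n w"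

text \<open>Probability (over the algorithm's randomness) that w(ALG(w)) = f(w):
  either it selects some i with w i = f(w), or it selects nothing and f(w) = 0.\<close>
definition alg_hit :: "nat \<Rightarrow> (nat \<Rightarrow> (nat \<Rightarrow> real) \<Rightarrow> real) \<Rightarrow> (nat \<Rightarrow> real) \<Rightarrow> real" where
  "alg_hit n p w =
     (\<Sum>i<n. accept_prob p w i * (if w i = fmax n w then 1 else 0))
     + (1 - (\<Sum>i<n. accept_prob p w i)) * (if fmax n w = 0 then 1 else 0)"

definition EoR :: "nat \<Rightarrow> (nat \<Rightarrow> real) measure \<Rightarrow> real" where
  "EoR n P = (SUP p \<in> {p. online_alg n p}. \<integral>w. alg_ratio n p w \<partial>P)"

definition PbM :: "nat \<Rightarrow> (nat \<Rightarrow> real) measure \<Rightarrow> real" where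
  "PbM n P = (SUP p \<in> {p. online_alg n p}. \<integral>w. alg_hit n p w \<partial>P)"

definition prod_dist :: "nat \<Rightarrow> (nat \<Rightarrow> real measure) \<Rightarrow> (nat \<Rightarrow> real) measure" where
  "prod_dist n D = PiM {..<n} D"

definition pow_dist :: "real \<Rightarrow> nat \<Rightarrow> (nat \<Rightarrow> real measure) \<Rightarrow> (nat \<Rightarrow> real) measure" where
  "pow_dist M n D = PiM {..<n} (\<lambda>e. distr (D e) borel (\<lambda>x. M powr x))"

end

theory Submission
  imports Defs
begin

definition TT :: "real \<Rightarrow> nat \<Rightarrow> (nat \<Rightarrow> real) \<Rightarrow> (nat \<Rightarrow> real)" where
  "TT M n w = compose {..<n} (\<lambda>x. M powr x) w"

definition qM :: "real \<Rightarrow> nat \<Rightarrow> (nat \<Rightarrow> (nat \<Rightarrow> real) \<Rightarrow> real) \<Rightarrow> nat \<Rightarrow> (nat \<Rightarrow> real) \<Rightarrow> real" where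
  "qM M n p = (\<lambda>i w. p i (TT M n w))"

definition pM :: "real \<Rightarrow> nat \<Rightarrow> (nat \<Rightarrow> (nat \<Rightarrow> real) \<Rightarrow> real) \<Rightarrow> nat \<Rightarrow> (nat \<Rightarrow> real) \<Rightarrow> real" where
  "pM M n q = (\<lambda>i w. q i (restrict (\<lambda>j. log M (w j)) {..<n}))"

definition GG :: "nat \<Rightarrow> real \<Rightarrow> (nat \<Rightarrow> (nat \<Rightarrow> real) \<Rightarrow> real) \<Rightarrow> (nat \<Rightarrow> real) \<Rightarrow> real" where
  "GG n M q w = (\<Sum>i<n. accept_prob q w i * M powr (w i - fmax n w))"

definition EE :: "nat \<Rightarrow> real \<Rightarrow> (nat \<Rightarrow> real) \<Rightarrow> real" where
  "EE n M w = (\<Sum>i<n. if w i = fmax n w then 0 else M powr (w i - fmax n w))"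

lemma sum_accept:
  fixes p :: "nat \<Rightarrow> (nat \<Rightarrow> real) \<Rightarrow> real"
  assumes "\<forall>i<k. 0 \<le> p i w \<and> p i w \<le> 1"
  shows "(\<Sum>i<k. accept_prob p w i) = 1 - (\<Prod>j<k. (1 - p j w))"
  using assms by (induction k) (auto simp: accept_prob_def algebra_simps)

lemma prod01:
  fixes p :: "nat \<Rightarrow> (nat \<Rightarrow> real) \<Rightarrow> real"
  assumes "\<forall>i<k. 0 \<le> p i w \<and> p i w \<le> 1"
  shows "0 \<le> (\<Prod>j<k. (1 - p j w)) \<and> (\<Prod>j<k. (1 - p j w)) \<le> 1"
proof -
  have h: "\<And>j. j \<in> {..<k} \<Longrightarrow> 0 \<le> 1 - p j w \<and> 1 - p j w \<le> 1" using assms by fastforce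
  show ?thesis using prod_nonneg[of "{..<k}" "\<lambda>j. 1 - p j w"] prod_le_1[of "{..<k}" "\<lambda>j. 1 - p j w"] h by auto
qed

lemma alg_bounds: "online_alg n p \<Longrightarrow> i < n \<Longrightarrow> 0 \<le> p i w \<and> p i w \<le> 1"
  by (auto simp: online_alg_def)

lemma acc01:
  assumes "online_alg n p" "i < n"
  shows "0 \<le> accept_prob p w i \<and> accept_prob p w i \<le> 1"
proof -
  have "\<forall>j<i. 0 \<le> p j w \<and> p j w \<le> 1" using assms alg_bounds by auto
  from prod01[of i p w, OF this] alg_bounds[OF assms, of w] show ?thesis
    unfolding accept_prob_def by (auto intro: mult_le_one)
qed

lemma sumacc01:
  assumes "online_alg n p"
  shows "0 \<le> (\<Sum>i<n. accept_prob p w i) \<and> (\<Sum>i<n. accept_prob p w i) \<le> 1"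
proof -
  have "\<forall>j<n. 0 \<le> p j w \<and> p j w \<le> 1" using assms alg_bounds by auto
  from prod01[of n p w, OF this] sum_accept[of n p w, OF this] show ?thesis by auto
qed

lemma fmax_ge: "i < n \<Longrightarrow> w i \<le> fmax n w"
  by (auto simp: fmax_def)

lemma TT_apply: "i < n \<Longrightarrow> TT M n w i = M powr w i"
  by (simp add: TT_def compose_def)

lemma TT_meas: "TT M n \<in> measurable (PiM {..<n} (\<lambda>_. borel)) (PiM {..<n} (\<lambda>_. borel))"
  unfolding TT_def compose_def by measurable

lemma log_meas: "(\<lambda>w. restrict (\<lambda>j. log M (w j)) {..<n}) \<in> measurable (PiM {..<n} (\<lambda>_. borel)) (PiM {..<n} (\<lambda>_. borel))"
  by measurable

lemma qM_alg:
  assumes "online_alg n p"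
  shows "online_alg n (qM M n p)"
  unfolding online_alg_def
proof (intro allI impI conjI)
  fix i and w :: "nat \<Rightarrow> real" assume i: "i < n"
  show "0 \<le> qM M n p i w" "qM M n p i w \<le> 1" using alg_bounds[OF assms i] by (auto simp: qM_def)
  show "qM M n p i \<in> borel_measurable (Pi\<^sub>M {..<n} (\<lambda>_. borel))"
    unfolding qM_def using measurable_comp[OF TT_meas[of M n], of "p i"] assms i
    by (auto simp: online_alg_def o_def)
next
  fix i and w w' :: "nat \<Rightarrow> real" assume i: "i < n" and h: "\<forall>j\<le>i. w j = w' j"
  have "\<forall>j\<le>i. TT M n w j = TT M n w' j" using h by (simp add: TT_def compose_def)
  then show "qM M n p i w = qM M n p i w'" using assms i by (auto simp: online_alg_def qM_def)
qed

lemma pM_alg: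
  assumes "online_alg n q"
  shows "online_alg n (pM M n q)"
  unfolding online_alg_def
proof (intro allI impI conjI)
  fix i and w :: "nat \<Rightarrow> real" assume i: "i < n"
  show "0 \<le> pM M n q i w" "pM M n q i w \<le> 1" using alg_bounds[OF assms i] by (auto simp: pM_def)
  show "pM M n q i \<in> borel_measurable (Pi\<^sub>M {..<n} (\<lambda>_. borel))"
    unfolding pM_def using measurable_comp[OF log_meas[of M n], of "q i"] assms i
    by (auto simp: online_alg_def o_def)
next
  fix i and w w' :: "nat \<Rightarrow> real" assume i: "i < n" and h: "\<forall>j\<le>i. w j = w' j"
  have "\<forall>j\<le>i. restrict (\<lambda>j. log M (w j)) {..<n} j = restrict (\<lambda>j. log M (w' j)) {..<n} j" using h by simp
  then show "pM M n q i w = pM M n q i w'" using assms i by (auto simp: online_alg_def pM_def)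
qed

lemma qp_eq:
  assumes "1 < M" "online_alg n q" "i < n"
  shows "qM M n (pM M n q) i w = q i w"
proof -
  have "\<forall>j\<le>i. restrict (\<lambda>j. log M (TT M n w j)) {..<n} j = w j"
    using assms by (auto simp: TT_apply)
  then show ?thesis using assms unfolding qM_def pM_def online_alg_def by blast
qed

lemma GG_qp:
  assumes "1 < M" "online_alg n q"
  shows "GG n M (qM M n (pM M n q)) w = GG n M q w"
  unfolding GG_def accept_prob_def
  by (intro sum.cong refl) (simp add: qp_eq[OF assms])

lemma fmax_TT:
  assumes "1 < M" "0 < n"
  shows "fmax n (TT M n w) = M powr fmax n w"
proof -
  have "TT M n w ` {..<n} = (\<lambda>x. M powr x) ` (w ` {..<n})"
    by (auto simp: TT_apply image_image)
  moreover have "mono (\<lambda>x. M powr x)" using assms by (auto intro!: monoI powr_mono)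
  ultimately show ?thesis unfolding fmax_def
    using mono_Max_commute[of "\<lambda>x. M powr x" "w ` {..<n}"] assms
    by (metis finite_imageI finite_lessThan image_is_empty lessThan_empty_iff not_less_zero)
qed

lemma ratio_TT:
  assumes "1 < M" "0 < n"
  shows "alg_ratio n p (TT M n w) = GG n M (qM M n p) w"
  unfolding alg_ratio_def GG_def fmax_TT[OF assms] sum_divide_distrib
  by (intro sum.cong refl) (simp add: TT_apply accept_prob_def qM_def powr_diff)

lemma B1:
  assumes "1 < M" "online_alg n q"
  shows "GG n M q w \<le> alg_hit n q w + EE n M w"
proof -
  have "GG n M q w \<le> (\<Sum>i<n. accept_prob q w i * (if w i = fmax n w then 1 else 0)) + EE n M w"
    unfolding GG_def EE_def sum.distrib[symmetric]
  proof (intro sum_mono)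
    fix i assume "i \<in> {..<n}"
    then have a: "0 \<le> accept_prob q w i \<and> accept_prob q w i \<le> 1" using acc01[OF assms(2)] by auto
    have "accept_prob q w i * M powr (w i - fmax n w) \<le> M powr (w i - fmax n w)"
      using a by (intro mult_left_le_one_le) auto
    then show "accept_prob q w i * M powr (w i - fmax n w) \<le> accept_prob q w i * (if w i = fmax n w then 1 else 0) +
          (if w i = fmax n w then 0 else M powr (w i - fmax n w))" using assms by auto
  qed
  moreover have "0 \<le> (1 - (\<Sum>i<n. accept_prob q w i)) * (if fmax n w = 0 then 1 else 0)"
    using sumacc01[OF assms(2), of w] by auto
  ultimately show ?thesis unfolding alg_hit_def by linarith
qed

lemma B2:
  assumes "1 < M" "online_alg n q" "fmax n w \<noteq> 0"
  shows "alg_hit n q w \<le> GG n M q w"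
  unfolding alg_hit_def GG_def using assms(3)
proof (simp, intro sum_mono)
  fix i assume "i \<in> {..<n}"
  then have a: "0 \<le> accept_prob q w i" using acc01[OF assms(2)] by auto
  show "accept_prob q w i * (if w i = fmax n w then 1 else 0) \<le> accept_prob q w i * M powr (w i - fmax n w)"
    using a assms by auto
qed


abbreviation BB :: "nat \<Rightarrow> (nat \<Rightarrow> real) measure" where
  "BB n \<equiv> PiM {..<n} (\<lambda>_. borel)"

lemma fmax_meas: "fmax n \<in> borel_measurable (BB n)"
  unfolding fmax_def by measurable

lemma alg_meas: "online_alg n q \<Longrightarrow> i < n \<Longrightarrow> q i \<in> borel_measurable (BB n)"
  by (auto simp: online_alg_def)

lemma acc_meas:
  assumes "online_alg n q" "i < n"
  shows "(\<lambda>w. accept_prob q w i) \<in> borel_measurable (BB n)"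
  unfolding accept_prob_def using assms
  by (intro borel_measurable_times borel_measurable_prod borel_measurable_diff) (auto intro: alg_meas)

lemma comp_meas: "(\<lambda>w. w i) \<in> borel_measurable (BB n)" if "i < n"
  using that measurable_component_singleton[of i "{..<n}" "\<lambda>_. borel"] by auto

lemma GG_meas:
  assumes "online_alg n q"
  shows "GG n M q \<in> borel_measurable (BB n)"
  unfolding GG_def
proof (intro borel_measurable_sum borel_measurable_times)
  fix i assume i: "i \<in> {..<n}"
  show "(\<lambda>w. accept_prob q w i) \<in> borel_measurable (BB n)" using acc_meas assms i by auto
  have [measurable]: "fmax n \<in> borel_measurable (BB n)" "(\<lambda>w. w i) \<in> borel_measurable (BB n)"
    using fmax_meas comp_meas i by auto
  show "(\<lambda>x. M powr (x i - fmax n x)) \<in> borel_measurable (BB n)" by measurable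
qed

lemma EE_meas: "EE n M \<in> borel_measurable (BB n)"
  unfolding EE_def
proof (intro borel_measurable_sum)
  fix i assume i: "i \<in> {..<n}"
  have [measurable]: "fmax n \<in> borel_measurable (BB n)" "(\<lambda>w. w i) \<in> borel_measurable (BB n)"
    using fmax_meas comp_meas i by auto
  show "(\<lambda>x. if x i = fmax n x then 0 else M powr (x i - fmax n x)) \<in> borel_measurable (BB n)" by measurable
qed

lemma hit_meas:
  assumes "online_alg n q"
  shows "alg_hit n q \<in> borel_measurable (BB n)"
proof -
  have [measurable]: "fmax n \<in> borel_measurable (BB n)" using fmax_meas by auto
  have [measurable]: "(\<lambda>w. \<Sum>i<n. accept_prob q w i) \<in> borel_measurable (BB n)"
    using acc_meas[OF assms] by (intro borel_measurable_sum) auto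
  have [measurable]: "(\<lambda>w. \<Sum>i<n. accept_prob q w i * (if w i = fmax n w then 1 else 0)) \<in> borel_measurable (BB n)"
  proof (intro borel_measurable_sum borel_measurable_times)
    fix i assume i: "i \<in> {..<n}"
    show "(\<lambda>w. accept_prob q w i) \<in> borel_measurable (BB n)" using acc_meas assms i by auto
    have [measurable]: "(\<lambda>w. w i) \<in> borel_measurable (BB n)"
      using comp_meas i by auto
    show "(\<lambda>x. if x i = fmax n x then 1 else 0 :: real) \<in> borel_measurable (BB n)" by measurable
  qed
  show ?thesis unfolding alg_hit_def by measurable
qed

lemma ratio_meas:
  assumes "online_alg n q"
  shows "alg_ratio n q \<in> borel_measurable (BB n)"
proof -
  have [measurable]: "fmax n \<in> borel_measurable (BB n)" using fmax_meas by auto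
  have [measurable]: "(\<lambda>w. \<Sum>i<n. accept_prob q w i * w i) \<in> borel_measurable (BB n)"
  proof (intro borel_measurable_sum borel_measurable_times)
    fix i assume i: "i \<in> {..<n}"
    show "(\<lambda>w. accept_prob q w i) \<in> borel_measurable (BB n)" using acc_meas assms i by auto
    show "(\<lambda>w. w i) \<in> borel_measurable (BB n)"
      using comp_meas i by auto
  qed
  show ?thesis unfolding alg_ratio_def by measurable
qed

lemma pow_dist_eq:
  assumes "\<forall>e<n. prob_space (D e)" "\<forall>e<n. sets (D e) = sets borel"
  shows "pow_dist M n D = distr (prod_dist n D) (BB n) (TT M n)"
proof -
  define D' where "D' e = (if e < n then D e else return borel (0::real))" for e
  define R where "R = (\<lambda>_::nat. return borel (0::real))"
  have pD': "product_prob_space D'"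
    by (rule product_prob_spaceI) (auto simp: D'_def assms prob_space_return)
  have pR: "product_prob_space R"
    by (rule product_prob_spaceI) (auto simp: R_def prob_space_return)
  have sD': "sets (D' e) = sets borel" for e using assms by (auto simp: D'_def)
  have mf: "(\<lambda>x. M powr x) \<in> measurable (D' i) (R i)" for i
    unfolding R_def by (subst measurable_cong_sets[OF sD' sets_return]) measurable
  have eq: "distr (PiM {..<n} D') (PiM {..<n} R) (compose {..<n} (\<lambda>x. M powr x))
     = PiM {..<n} (\<lambda>i. distr (D' i) (R i) (\<lambda>x. M powr x))"
    by (rule distr_PiM_finite_prob_space[OF _ pD' pR mf]) auto
  have "pow_dist M n D = PiM {..<n} (\<lambda>i. distr (D' i) (R i) (\<lambda>x. M powr x))"
    unfolding pow_dist_def by (intro PiM_cong refl distr_cong) (auto simp: D'_def R_def)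
  also have "\<dots> = distr (PiM {..<n} D') (PiM {..<n} R) (compose {..<n} (\<lambda>x. M powr x))"
    using eq by simp
  also have "\<dots> = distr (prod_dist n D) (BB n) (TT M n)"
    unfolding prod_dist_def TT_def
    by (intro distr_cong PiM_cong sets_PiM_cong refl) (auto simp: D'_def R_def)
  finally show ?thesis .
qed

lemma sets_P:
  assumes "\<forall>e<n. sets (D e) = sets borel"
  shows "sets (prod_dist n D) = sets (BB n)"
  unfolding prod_dist_def using assms by (intro sets_PiM_cong) auto


lemma powr_le1: "1 \<le> (M::real) \<Longrightarrow> x \<le> 0 \<Longrightarrow> M powr x \<le> 1"
  using powr_mono[of x 0 M] by simp

lemma GG_bound:
  assumes "1 \<le> M" "online_alg n q"
  shows "\<bar>GG n M q w\<bar> \<le> real n"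
proof -
  have "\<bar>GG n M q w\<bar> \<le> (\<Sum>i<n. \<bar>accept_prob q w i * M powr (w i - fmax n w)\<bar>)"
    unfolding GG_def by (rule sum_abs)
  also have "\<dots> \<le> (\<Sum>i<n. 1)"
  proof (intro sum_mono)
    fix i assume i: "i \<in> {..<n}"
    then have a: "0 \<le> accept_prob q w i \<and> accept_prob q w i \<le> 1" using acc01[OF assms(2)] by auto
    have b: "M powr (w i - fmax n w) \<le> 1" using assms i fmax_ge[of i n w] by (intro powr_le1) auto
    have c: "0 \<le> M powr (w i - fmax n w)" by simp
    show "\<bar>accept_prob q w i * M powr (w i - fmax n w)\<bar> \<le> 1"
      using a b c by (simp add: abs_mult mult_le_one)
  qed
  finally show ?thesis by simp
qed

lemma EE_bound:
  assumes "1 \<le> M"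
  shows "\<bar>EE n M w\<bar> \<le> real n"
proof -
  have "\<bar>EE n M w\<bar> \<le> (\<Sum>i<n. \<bar>if w i = fmax n w then 0 else M powr (w i - fmax n w)\<bar>)"
    unfolding EE_def by (rule sum_abs)
  also have "\<dots> \<le> (\<Sum>i<n. 1)"
  proof (intro sum_mono)
    fix i assume i: "i \<in> {..<n}"
    have b: "M powr (w i - fmax n w) \<le> 1" using assms i fmax_ge[of i n w] by (intro powr_le1) auto
    show "\<bar>if w i = fmax n w then 0 else M powr (w i - fmax n w)\<bar> \<le> 1"
      using b by auto
  qed
  finally show ?thesis by simp
qed

lemma hit_bound:
  assumes "online_alg n q"
  shows "\<bar>alg_hit n q w\<bar> \<le> real n + 1"
proof -
  have "\<bar>\<Sum>i<n. accept_prob q w i * (if w i = fmax n w then 1 else 0)\<bar> \<le> (\<Sum>i<n. \<bar>accept_prob q w i * (if w i = fmax n w then 1 else 0)\<bar>)"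
    by (rule sum_abs)
  also have "\<dots> \<le> (\<Sum>i<n. 1)"
  proof (intro sum_mono)
    fix i assume i: "i \<in> {..<n}"
    then have a: "0 \<le> accept_prob q w i \<and> accept_prob q w i \<le> 1" using acc01[OF assms] by auto
    show "\<bar>accept_prob q w i * (if w i = fmax n w then 1 else 0)\<bar> \<le> 1" using a by auto
  qed
  finally have 1: "\<bar>\<Sum>i<n. accept_prob q w i * (if w i = fmax n w then 1 else 0)\<bar> \<le> real n" by simp
  have 2: "\<bar>(1 - (\<Sum>i<n. accept_prob q w i)) * (if fmax n w = 0 then 1 else 0)\<bar> \<le> 1"
    using sumacc01[OF assms, of w] by auto
  show ?thesis unfolding alg_hit_def using 1 2 by linarith
qed

lemma EE_lim: "((\<lambda>M. EE n M w) \<longlongrightarrow> 0) at_top"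
  unfolding EE_def
proof (intro tendsto_null_sum)
  fix i assume i: "i \<in> {..<n}"
  show "((\<lambda>M. if w i = fmax n w then 0 else M powr (w i - fmax n w)) \<longlongrightarrow> 0) at_top"
  proof (cases "w i = fmax n w")
    case True then show ?thesis by simp
  next
    case False
    then have "w i - fmax n w < 0" using fmax_ge[of i n w] i by auto
    from tendsto_neg_powr[OF this filterlim_ident] False show ?thesis by simp
  qed
qed


theorem proposition4:
  fixes n :: nat and D :: "nat \<Rightarrow> real measure"
  assumes "0 < n"
    and "\<forall>e<n. prob_space (D e)"
    and "\<forall>e<n. sets (D e) = sets borel"
    and "\<forall>e<n. AE x in D e. 0 \<le> x"
    and "\<forall>e<n. \<forall>x. measure (D e) {x} = 0"
  shows "((\<lambda>M. EoR n (pow_dist M n D)) \<longlongrightarrow> PbM n (prod_dist n D)) at_top"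
proof -
  define P where "P = prod_dist n D"
  define A where "A = {p. online_alg n p}"
  have pP: "prob_space P" unfolding P_def prod_dist_def using assms(2) by (intro prob_space_PiM) auto
  interpret P: prob_space P by (rule pP)
  have sP: "sets P = sets (BB n)" unfolding P_def using sets_P assms(3) by auto
  have mP: "f \<in> borel_measurable P" if "f \<in> borel_measurable (BB n)" for f :: "(nat \<Rightarrow> real) \<Rightarrow> real"
    using that measurable_cong_sets[OF sP refl] by auto
  have TTm: "TT M n \<in> measurable P (BB n)" for M
    using TT_meas measurable_cong_sets[OF sP refl] by auto
  have Ane: "A \<noteq> {}"
  proof -
    have "(\<lambda>i w. 0) \<in> A" unfolding A_def online_alg_def by auto
    then show ?thesis by auto
  qed
  have int_G: "integrable P (GG n M q)" if "1 \<le> M" "q \<in> A" for M q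
    using that GG_bound GG_meas by (intro P.integrable_const_bound[where B="real n"] mP) (auto simp: A_def)
  have int_E: "integrable P (EE n M)" if "1 \<le> M" for M
    using that EE_bound EE_meas by (intro P.integrable_const_bound[where B="real n"] mP) auto
  have int_H: "integrable P (alg_hit n q)" if "q \<in> A" for q
    using that hit_bound hit_meas by (intro P.integrable_const_bound[where B="real n + 1"] mP) (auto simp: A_def)
  have transfer: "(\<integral>w. alg_ratio n p w \<partial>pow_dist M n D) = (\<integral>w. GG n M (qM M n p) w \<partial>P)"
    if "1 < M" "p \<in> A" for M p
  proof -
    have "(\<integral>w. alg_ratio n p w \<partial>pow_dist M n D) = (\<integral>w. alg_ratio n p (TT M n w) \<partial>P)"
      unfolding pow_dist_eq[OF assms(2,3)] P_def[symmetric]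
      using that by (intro integral_distr TTm ratio_meas) (auto simp: A_def)
    also have "\<dots> = (\<integral>w. GG n M (qM M n p) w \<partial>P)"
      using ratio_TT[OF that(1) assms(1)] by simp
    finally show ?thesis .
  qed
  have intle: "(\<integral>w. f w \<partial>P) \<le> B" if "integrable P f" "\<And>w. f w \<le> B" for f :: "(nat \<Rightarrow> real) \<Rightarrow> real" and B :: real
  proof -
    have "(\<integral>w. f w \<partial>P) \<le> (\<integral>w. B \<partial>P)" by (rule Bochner_Integration.integral_mono[OF that(1)]) (auto simp: that(2))
    then show ?thesis by (simp add: P.prob_space)
  qed
  have Rbdd: "bdd_above ((\<lambda>p. \<integral>w. alg_ratio n p w \<partial>pow_dist M n D) ` A)" if "1 < M" for M
  proof (rule bdd_aboveI2)
    fix p assume p: "p \<in> A"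
    then have qa: "qM M n p \<in> A" using qM_alg by (auto simp: A_def)
    show "(\<integral>w. alg_ratio n p w \<partial>pow_dist M n D) \<le> real n"
      unfolding transfer[OF that p] using int_G[OF _ qa] that GG_bound[of M n "qM M n p"] qa
      by (intro intle) (auto simp: A_def abs_le_iff)
  qed
  have Hbdd: "bdd_above ((\<lambda>q. \<integral>w. alg_hit n q w \<partial>P) ` A)"
  proof (rule bdd_aboveI2)
    fix q assume q: "q \<in> A"
    show "(\<integral>w. alg_hit n q w \<partial>P) \<le> real n + 1"
      using int_H[OF q] hit_bound[of n q] q by (intro intle) (auto simp: A_def abs_le_iff)
  qed
  have AEf: "AE w in P. fmax n w \<noteq> 0"
  proof -
    have D0: "prob_space (D 0)" "sets (D 0) = sets borel" "AE x in D 0. 0 \<le> x" "measure (D 0) {0} = 0"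
      using assms assms(1) by auto
    have "{0} \<in> null_sets (D 0)"
      using D0 by (simp add: null_sets_def finite_measure.emeasure_eq_measure prob_space.finite_measure)
    then have "AE x in D 0. x \<noteq> 0" by (rule AE_I') auto
    with D0(3) have "AE x in D 0. 0 \<le> x \<and> x \<noteq> 0" by eventually_elim auto
    then have "AE w in P. 0 \<le> w 0 \<and> w 0 \<noteq> 0"
      unfolding P_def prod_dist_def using assms(1,2)
      by (intro AE_PiM_component[where P="\<lambda>x. 0 \<le> x \<and> x \<noteq> 0"]) auto
    then show ?thesis
    proof eventually_elim
      case (elim w)
      then show ?case using fmax_ge[OF assms(1), of w] by auto
    qed
  qed
  have lower: "PbM n P \<le> EoR n (pow_dist M n D)" if M: "1 < M" for M
    unfolding PbM_def EoR_def A_def[symmetric]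
  proof (rule cSUP_least[OF Ane])
    fix q assume q: "q \<in> A"
    have pa: "pM M n q \<in> A" using q pM_alg by (auto simp: A_def)
    have "(\<integral>w. alg_hit n q w \<partial>P) \<le> (\<integral>w. GG n M q w \<partial>P)"
      using AEf B2[OF M] q int_H[OF q] int_G[OF _ q] M
      by (intro integral_mono_AE) (auto simp: A_def elim!: eventually_mono)
    also have "\<dots> = (\<integral>w. GG n M (qM M n (pM M n q)) w \<partial>P)"
      using GG_qp[OF M] q by (simp add: A_def)
    also have "\<dots> = (\<integral>w. alg_ratio n (pM M n q) w \<partial>pow_dist M n D)"
      using transfer[OF M pa] by simp
    also have "\<dots> \<le> (SUP p\<in>A. \<integral>w. alg_ratio n p w \<partial>pow_dist M n D)"
      by (rule cSUP_upper[OF pa Rbdd[OF M]])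
    finally show "(\<integral>w. alg_hit n q w \<partial>P) \<le> (SUP p\<in>A. \<integral>w. alg_ratio n p w \<partial>pow_dist M n D)" .
  qed
  have upper: "EoR n (pow_dist M n D) \<le> PbM n P + (\<integral>w. EE n M w \<partial>P)" if M: "1 < M" for M
    unfolding EoR_def A_def[symmetric]
  proof (rule cSUP_least[OF Ane])
    fix p assume p: "p \<in> A"
    have qa: "qM M n p \<in> A" using qM_alg p by (auto simp: A_def)
    have "(\<integral>w. alg_ratio n p w \<partial>pow_dist M n D) = (\<integral>w. GG n M (qM M n p) w \<partial>P)"
      by (rule transfer[OF M p])
    also have "\<dots> \<le> (\<integral>w. alg_hit n (qM M n p) w + EE n M w \<partial>P)"
      using B1[OF M] qa int_G[OF _ qa] int_H[OF qa] int_E M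
      by (intro Bochner_Integration.integral_mono Bochner_Integration.integrable_add) (auto simp: A_def)
    also have "\<dots> = (\<integral>w. alg_hit n (qM M n p) w \<partial>P) + (\<integral>w. EE n M w \<partial>P)"
      using int_H[OF qa] int_E M by (intro Bochner_Integration.integral_add) auto
    also have "(\<integral>w. alg_hit n (qM M n p) w \<partial>P) \<le> PbM n P"
      unfolding PbM_def A_def[symmetric] by (rule cSUP_upper[OF qa Hbdd])
    finally show "(\<integral>w. alg_ratio n p w \<partial>pow_dist M n D) \<le> PbM n P + (\<integral>w. EE n M w \<partial>P)"
      by simp
  qed
  have errlim: "((\<lambda>M. \<integral>w. EE n M w \<partial>P) \<longlongrightarrow> 0) at_top"
  proof -
    have "((\<lambda>M. \<integral>w. EE n M w \<partial>P) \<longlongrightarrow> (\<integral>w. 0 \<partial>P)) at_top"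
    proof (rule integral_dominated_convergence_at_top[where w="\<lambda>_. real n"])
      show "(\<lambda>_. 0::real) \<in> borel_measurable P" by simp
      show "EE n t \<in> borel_measurable P" for t using EE_meas by (intro mP)
      show "integrable P (\<lambda>_. real n)" by simp
      show "AE x in P. ((\<lambda>i. EE n i x) \<longlongrightarrow> 0) at_top" using EE_lim by auto
      show "\<forall>\<^sub>F i in at_top. AE x in P. norm (EE n i x) \<le> real n"
        using eventually_ge_at_top[of "1::real"] by eventually_elim (auto intro: EE_bound)
    qed
    then show ?thesis by simp
  qed
  have ev: "eventually (\<lambda>M::real. 1 < M) at_top" by (rule eventually_gt_at_top)
  show ?thesis unfolding P_def[symmetric]
  proof (rule tendsto_sandwich[OF _ _ tendsto_const])
    show "\<forall>\<^sub>F M in at_top. PbM n P \<le> EoR n (pow_dist M n D)"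
      using ev by eventually_elim (rule lower)
    show "\<forall>\<^sub>F M in at_top. EoR n (pow_dist M n D) \<le> PbM n P + (\<integral>w. EE n M w \<partial>P)"
      using ev by eventually_elim (rule upper)
    show "((\<lambda>M. PbM n P + (\<integral>w. EE n M w \<partial>P)) \<longlongrightarrow> PbM n P) at_top"
      using tendsto_add[OF tendsto_const errlim] by simp
  qed
qed

end
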